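(* Let $D\in\mathbb{D}^n_+$, $W\in\mathbb{R}^{n\times n}$, $u\in\mathbb{R}^n$, $A:=W-D$, and $\mathcal X=\{x\in\mathbb{R}^n: Dx\in[0,1]^n\}$. Assume $A$ is Lyapunov diagonally stable with diagonal certificate $\Lambda\in\mathbb{D}^n_+$, i.e. $A^\top\Lambda+\Lambda A\prec0$. Then the projected dynamical system $\dot x=\Pi_{\mathcal X}(x,Ax+u)$ on $\mathcal X$ has a unique equilibrium $x^\star\in\mathcal X$, and there exists $\mu>0$ such that for each initial condition $x(0)\in\mathcal X$, the solution satisfies, for all $t\ge0$, $$\|x(t)-x^\star\|_\Lambda\le e^{-\mu t}\|x(0)-x^\star\|_\Lambda.$$ Thus $x^\star$ is globally exponentially stable.
   Context: $\mathbb{D}^n_+$ is the set of positive diagonal matrices. $\|x\|_\Lambda=\sqrt{x^\top\Lambda x}$. For $x\in\mathcal X$, $T_{\mathcal X}(x)$ is the tangent cone of $\mathcal X$ at $x$ and $\Pi_{\mathcal X}(x,v)=\arg\min_{y\in T_{\mathcal X}(x)}\|y-v\|^2$. Solutions of the projected dynamical system are absolutely continuous curves $x:[0,\infty)\to\mathcal X$ satisfying $\dot x(t)=\Pi_{\mathcal X}(x(t),Ax(t)+u)$ for almost every $t$; they exist and are unique for each initial condition in $\mathcal X$. *)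

theory Defs
  imports "HOL-Analysis.Analysis"
begin

definition pos_diag :: "real^'n^'n \<Rightarrow> bool" where
  "pos_diag M \<longleftrightarrow> (\<forall>i j. i \<noteq> j \<longrightarrow> M$i$j = 0) \<and> (\<forall>i. M$i$i > 0)"

definition neg_definite :: "real^'n^'n \<Rightarrow> bool" where
  "neg_definite M \<longleftrightarrow> transpose M = M \<and> (\<forall>y. y \<noteq> 0 \<longrightarrow> y \<bullet> (M *v y) < 0)"

definition wnorm :: "real^'n^'n \<Rightarrow> real^'n \<Rightarrow> real" where
  "wnorm L x = sqrt (x \<bullet> (L *v x))"

definition tangent_cone :: "'a::real_normed_vector set \<Rightarrow> 'a \<Rightarrow> 'a set" where
  "tangent_cone X x = closure {c *\<^sub>R (y - x) | c y. c > 0 \<and> y \<in> X}"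

definition proj_tc :: "'a::real_normed_vector set \<Rightarrow> 'a \<Rightarrow> 'a \<Rightarrow> 'a" where
  "proj_tc X x v = (SOME y. y \<in> tangent_cone X x \<and>
      (\<forall>z \<in> tangent_cone X x. (norm (y - v))\<^sup>2 \<le> (norm (z - v))\<^sup>2))"

definition abs_continuous_on :: "real \<Rightarrow> real \<Rightarrow> (real \<Rightarrow> 'a::real_normed_vector) \<Rightarrow> bool" where
  "abs_continuous_on a b f \<longleftrightarrow>
     (\<forall>\<epsilon>>0. \<exists>\<delta>>0. \<forall>(m::nat) (l::nat \<Rightarrow> real) (r::nat \<Rightarrow> real).
        (\<forall>k<m. a \<le> l k \<and> l k \<le> r k \<and> r k \<le> b) \<and>
        (\<forall>i<m. \<forall>j<m. i \<noteq> j \<longrightarrow> r i \<le> l j \<or> r j \<le> l i) \<and>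
        (\<Sum>k<m. r k - l k) < \<delta>
        \<longrightarrow> (\<Sum>k<m. norm (f (r k) - f (l k))) < \<epsilon>)"

definition box_set :: "real^'n^'n \<Rightarrow> (real^'n) set" where
  "box_set D = {x. \<forall>i. 0 \<le> (D *v x)$i \<and> (D *v x)$i \<le> 1}"

definition pds_solution :: "(real^'n) set \<Rightarrow> real^'n^'n \<Rightarrow> real^'n \<Rightarrow> (real \<Rightarrow> real^'n) \<Rightarrow> bool" where
  "pds_solution X A u x \<longleftrightarrow>
     (\<forall>t\<ge>0. x t \<in> X) \<and>
     (\<forall>T\<ge>0. abs_continuous_on 0 T x) \<and>
     (AE t in lborel. t \<ge> 0 \<longrightarrow>
        (x has_vector_derivative proj_tc X (x t) (A *v x t + u)) (at t within {0..}))"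

end

theory Submission
  imports Defs
begin


lemma diag_mult:
  assumes "pos_diag M" shows "(M *v x)$i = M$i$i * x$i"
proof -
  have "(M *v x)$i = (\<Sum>j\<in>UNIV. M$i$j * x$j)" unfolding matrix_vector_mult_def by simp
  also have "\<dots> = (\<Sum>j\<in>UNIV. if j = i then M$i$i * x$i else 0)"
    using assms unfolding pos_diag_def by (intro sum.cong) auto
  finally have "(M *v x)$i = (\<Sum>j\<in>UNIV. if j = i then M$i$i * x$i else 0)" .
  then show ?thesis by simp
qed

definition bx :: "real^'n^'n \<Rightarrow> real^'n" where "bx D = (\<chi> i. 1 / D$i$i)"

lemma scal_iff: "(d::real) > 0 \<Longrightarrow> (0 \<le> d * x \<and> d * x \<le> 1) \<longleftrightarrow> (0 \<le> x \<and> x \<le> 1 / d)"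
  by (auto simp: zero_le_mult_iff le_divide_eq mult.commute)

lemma box_eq: assumes "pos_diag D" shows "box_set D = cbox 0 (bx D)"
proof -
  have d: "D$i$i > 0" for i using assms by (auto simp: pos_diag_def)
  show ?thesis
    unfolding box_set_def mem_box_cart set_eq_iff bx_def
    using d by (simp add: diag_mult[OF assms] scal_iff)
qed

definition boxcone :: "real^'n^'n \<Rightarrow> real^'n \<Rightarrow> (real^'n) set" where
  "boxcone D x = {z. \<forall>i. (x$i = 0 \<longrightarrow> 0 \<le> z$i) \<and> (x$i = bx D $ i \<longrightarrow> z$i \<le> 0)}"

lemma closed_cone: "closed (boxcone D x)"
proof -
  have "boxcone D x = (\<Inter>i. {z. x$i = 0 \<longrightarrow> 0 \<le> z$i} \<inter> {z. x$i = bx D $ i \<longrightarrow> z$i \<le> 0})"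
    unfolding boxcone_def by auto
  moreover have "closed {z::real^_. x$i = 0 \<longrightarrow> 0 \<le> z$i}" for i
    by (cases "x$i = 0") (auto simp: closed_halfspace_component_le_cart closed_halfspace_component_ge_cart)
  moreover have "closed {z::real^_. x$i = bx D $ i \<longrightarrow> z$i \<le> 0}" for i
    by (cases "x$i = bx D $ i") (auto simp: closed_halfspace_component_le_cart closed_halfspace_component_ge_cart)
  ultimately show ?thesis by (auto intro!: closed_INT closed_Int)
qed

lemma tc_eq:
  assumes D: "pos_diag D" and x: "x \<in> box_set D"
  shows "tangent_cone (box_set D) x = boxcone D x"
proof
  have bpos: "bx D $ i > 0" for i using D by (auto simp: pos_diag_def bx_def)
  have xi: "0 \<le> x$i \<and> x$i \<le> bx D $ i" for i using x box_eq[OF D] by (auto simp: mem_box_cart)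
  show "tangent_cone (box_set D) x \<subseteq> boxcone D x"
    unfolding tangent_cone_def
  proof (rule closure_minimal[OF _ closed_cone])
    show "{c *\<^sub>R (y - x) |c y. 0 < c \<and> y \<in> box_set D} \<subseteq> boxcone D x"
    proof clarify
      fix c :: real and y assume c: "0 < c" and y: "y \<in> box_set D"
      have yi: "0 \<le> y$i \<and> y$i \<le> bx D $ i" for i using y box_eq[OF D] by (auto simp: mem_box_cart)
      show "c *\<^sub>R (y - x) \<in> boxcone D x" unfolding boxcone_def
        using c yi by (auto simp: mult_le_0_iff)
    qed
  qed
  show "boxcone D x \<subseteq> tangent_cone (box_set D) x"
  proof
    fix z assume z: "z \<in> boxcone D x"
    have ev: "eventually (\<lambda>s. 0 \<le> x$i + s * z$i \<and> x$i + s * z$i \<le> bx D $ i) (at_right 0)" for i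
    proof -
      have lim: "((\<lambda>s. x$i + s * z$i) \<longlongrightarrow> x$i) (at_right 0)"
        by (auto intro!: tendsto_eq_intros)
      have pos: "eventually (\<lambda>s::real. s > 0) (at_right 0)" by (simp add: eventually_at_right_less)
      consider "x$i = 0" | "x$i = bx D $ i" | "0 < x$i" "x$i < bx D $ i" using xi[of i] by force
      then show ?thesis
      proof cases
        case 1
        with z have zi: "0 \<le> z$i" by (auto simp: boxcone_def)
        have "eventually (\<lambda>s. x$i + s * z$i < bx D $ i) (at_right 0)"
          using order_tendstoD(2)[OF lim] 1 bpos[of i] by auto
        then show ?thesis using pos by eventually_elim (use 1 zi in auto)
      next
        case 2
        with z have zi: "z$i \<le> 0" by (auto simp: boxcone_def)
        have "eventually (\<lambda>s. x$i + s * z$i > 0) (at_right 0)"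
          using order_tendstoD(1)[OF lim] 2 bpos[of i] by auto
        then show ?thesis using pos by eventually_elim (use 2 zi in \<open>auto simp: mult_le_0_iff\<close>)
      next
        case 3
        have "eventually (\<lambda>s. x$i + s * z$i > 0) (at_right 0)"
          using order_tendstoD(1)[OF lim] 3 by auto
        moreover have "eventually (\<lambda>s. x$i + s * z$i < bx D $ i) (at_right 0)"
          using order_tendstoD(2)[OF lim] 3 by auto
        ultimately show ?thesis by eventually_elim auto
      qed
    qed
    have "eventually (\<lambda>s. \<forall>i. 0 \<le> x$i + s * z$i \<and> x$i + s * z$i \<le> bx D $ i) (at_right (0::real))"
      using ev by (simp add: eventually_all_finite)
    then have "eventually (\<lambda>s. (\<forall>i. 0 \<le> x$i + s * z$i \<and> x$i + s * z$i \<le> bx D $ i) \<and> s > 0) (at_right (0::real))"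
      using eventually_at_right_less[of 0] by (auto intro: eventually_conj)
    then obtain s where s: "\<forall>i. 0 \<le> x$i + s * z$i \<and> x$i + s * z$i \<le> bx D $ i" "s > 0"
      using eventually_happens[of _ "at_right (0::real)"] by (auto simp: trivial_limit_at_right_real)
    have y: "x + s *\<^sub>R z \<in> box_set D"
      using s(1) box_eq[OF D] by (auto simp: mem_box_cart)
    have "z \<in> {c *\<^sub>R (y - x) |c y. 0 < c \<and> y \<in> box_set D}"
      by (intro CollectI exI[of _ "1/s"] exI[of _ "x + s *\<^sub>R z"]) (use s(2) y in auto)
    then show "z \<in> tangent_cone (box_set D) x" unfolding tangent_cone_def
      by (rule closure_subset[THEN subsetD])
  qed
qed



definition pc :: "real \<Rightarrow> real \<Rightarrow> real \<Rightarrow> real" where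
  "pc b xi vi = (if xi = 0 then max vi 0 else if xi = b then min vi 0 else vi)"

lemma pc_min:
  assumes "0 < b" "(xi = 0 \<longrightarrow> 0 \<le> z) \<and> (xi = b \<longrightarrow> z \<le> 0)"
  shows "(pc b xi vi - vi)^2 \<le> (z - vi)^2"
proof -
  consider "xi = 0" "vi < 0" | "xi = 0" "vi \<ge> 0" | "xi \<noteq> 0" "xi = b" "vi > 0" | "xi \<noteq> 0" "xi = b" "vi \<le> 0" | "xi \<noteq> 0" "xi \<noteq> b"
    by force
  then show ?thesis
  proof cases
    case 1
    then have "(0 - vi)^2 \<le> (z - vi)^2" using assms by (intro power_mono) auto
    then show ?thesis using 1 by (simp add: pc_def)
  next
    case 3
    then have "(vi - 0)^2 \<le> (vi - z)^2" using assms by (intro power_mono) auto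
    then show ?thesis using 3 by (simp add: pc_def power2_commute)
  qed (auto simp: pc_def)
qed

lemma pc_uniq:
  assumes "0 < b" "(xi = 0 \<longrightarrow> 0 \<le> z) \<and> (xi = b \<longrightarrow> z \<le> 0)"
    and "(z - vi)^2 = (pc b xi vi - vi)^2"
  shows "z = pc b xi vi"
proof -
  consider "xi = 0" "vi < 0" | "xi = 0" "vi \<ge> 0" | "xi \<noteq> 0" "xi = b" "vi > 0" | "xi \<noteq> 0" "xi = b" "vi \<le> 0" | "xi \<noteq> 0" "xi \<noteq> b"
    by force
  then show ?thesis
  proof cases
    case 1
    then have "(z - vi)^2 = (0 - vi)^2" "z - vi \<ge> 0" "0 - vi \<ge> 0" using assms by (auto simp: pc_def)
    then have "z - vi = 0 - vi" using power2_eq_iff_nonneg by blast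
    then show ?thesis using 1 by (simp add: pc_def)
  next
    case 3
    then have "(vi - z)^2 = (vi - 0)^2" "vi - z \<ge> 0" "vi - 0 \<ge> 0" using assms by (auto simp: pc_def power2_commute)
    then have "vi - z = vi - 0" using power2_eq_iff_nonneg by blast
    then show ?thesis using 3 by (simp add: pc_def)
  qed (use assms in \<open>auto simp: pc_def\<close>)
qed

definition pp :: "real^'n^'n \<Rightarrow> real^'n \<Rightarrow> real^'n \<Rightarrow> real^'n" where
  "pp D x v = (\<chi> i. pc (bx D $ i) (x$i) (v$i))"

lemma norm2_sum: "(norm (w::real^'n))^2 = (\<Sum>i\<in>UNIV. (w$i)^2)"
proof -
  have "(norm w)^2 = inner w w" by (rule power2_norm_eq_inner)
  then show ?thesis by (simp add: inner_vec_def power2_eq_square)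
qed

lemma proj_eq:
  assumes D: "pos_diag D" and x: "x \<in> box_set D"
  shows "proj_tc (box_set D) x v = pp D x v"
proof -
  have bpos: "bx D $ i > 0" for i using D by (auto simp: pos_diag_def bx_def)
  have boxcone_i: "y \<in> boxcone D x \<longleftrightarrow> (\<forall>i. (x$i = 0 \<longrightarrow> 0 \<le> y$i) \<and> (x$i = bx D $ i \<longrightarrow> y$i \<le> 0))" for y
    by (simp add: boxcone_def)
  have ppc: "pp D x v \<in> boxcone D x" unfolding boxcone_i pp_def
    by (auto simp: pc_def) (metis bpos less_irrefl)
  have comp: "((pp D x v - v)$i)^2 \<le> ((z - v)$i)^2" if "z \<in> boxcone D x" for z i
    using pc_min[OF bpos[of i], of "x$i" "z$i" "v$i"] that unfolding boxcone_i pp_def by auto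
  have mn: "(norm (pp D x v - v))^2 \<le> (norm (z - v))^2" if "z \<in> boxcone D x" for z
    unfolding norm2_sum using comp[OF that] by (intro sum_mono) auto
  have un: "y = pp D x v" if "y \<in> boxcone D x" "(norm (y - v))^2 \<le> (norm (pp D x v - v))^2" for y
  proof -
    have eq: "((y - v)$i)^2 = ((pp D x v - v)$i)^2" for i
    proof (rule ccontr)
      assume "((y - v)$i)^2 \<noteq> ((pp D x v - v)$i)^2"
      with comp[OF that(1), of i] have "((pp D x v - v)$i)^2 < ((y - v)$i)^2" by simp
      then have "(\<Sum>i\<in>UNIV. ((pp D x v - v)$i)^2) < (\<Sum>i\<in>UNIV. ((y - v)$i)^2)"
        using comp[OF that(1)] by (intro sum_strict_mono_ex1) auto
      with that(2) show False unfolding norm2_sum by simp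
    qed
    show ?thesis
    proof (rule vec_eq_iff[THEN iffD2], rule allI)
      fix i
      show "y$i = pp D x v $ i"
        using pc_uniq[OF bpos[of i], of "x$i" "y$i" "v$i"] eq[of i] that(1)
        unfolding boxcone_i pp_def by auto
    qed
  qed
  have tc: "tangent_cone (box_set D) x = boxcone D x" by (rule tc_eq[OF D x])
  show ?thesis unfolding proj_tc_def tc
    by (rule some_equality) (use ppc mn un in auto)
qed



lemma pc_zero_iff:
  assumes "0 < b"
  shows "pc b qi wi = 0 \<longleftrightarrow> (qi = 0 \<longrightarrow> wi \<le> 0) \<and> (qi = b \<longrightarrow> 0 \<le> wi) \<and> (qi \<noteq> 0 \<and> qi \<noteq> b \<longrightarrow> wi = 0)"
  using assms by (auto simp: pc_def max_def min_def)

lemma bx_pos: "pos_diag D \<Longrightarrow> bx D $ i > 0"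
  by (auto simp: pos_diag_def bx_def)

lemma box_i: "pos_diag D \<Longrightarrow> x \<in> box_set D \<longleftrightarrow> (\<forall>i. 0 \<le> x$i \<and> x$i \<le> bx D $ i)"
  using box_eq[of D] by (simp add: mem_box_cart)

lemma vi_ineq:
  assumes D: "pos_diag D" and q: "q \<in> box_set D" and e: "pp D q w = 0" and z: "z \<in> box_set D"
  shows "(z$i - q$i) * w$i \<le> 0"
proof -
  have "pc (bx D $ i) (q$i) (w$i) = 0" using e by (simp add: pp_def vec_eq_iff)
  then have c: "(q$i = 0 \<longrightarrow> w$i \<le> 0) \<and> (q$i = bx D $ i \<longrightarrow> 0 \<le> w$i) \<and> (q$i \<noteq> 0 \<and> q$i \<noteq> bx D $ i \<longrightarrow> w$i = 0)"
    using pc_zero_iff[OF bx_pos[OF D]] by blast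
  have "0 \<le> z$i" "z$i \<le> bx D $ i" using z box_i[OF D] by auto
  then show ?thesis using c by (auto simp: mult_le_0_iff)
qed

lemma proj_ineq:
  assumes D: "pos_diag D" and x: "x \<in> box_set D" and xs: "xs \<in> box_set D"
  shows "(x$i - xs$i) * (pp D x v $ i - v$i) \<le> 0"
proof -
  have "0 \<le> xs$i" "xs$i \<le> bx D $ i" using xs box_i[OF D] by auto
  moreover have "0 \<le> x$i" "x$i \<le> bx D $ i" using x box_i[OF D] by auto
  ultimately show ?thesis using bx_pos[OF D, of i]
    by (auto simp: pp_def pc_def mult_le_0_iff max_def min_def)
qed

lemma negdef_const:
  fixes M :: "real^'n^'n"
  assumes "neg_definite M"
  shows "\<exists>c>0. \<forall>y. inner y (M *v y) \<le> - c * (norm y)^2"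
proof -
  let ?f = "\<lambda>y. inner y (M *v y)"
  have cont: "continuous_on (sphere 0 1) ?f" by (intro continuous_intros)
  obtain y1 :: "real^'n" where "norm y1 = 1" using vector_choose_size[of 1] by auto
  then have ne: "sphere (0::real^'n) 1 \<noteq> {}" by auto
  obtain y0 where y0: "y0 \<in> sphere 0 1" "\<forall>y\<in>sphere 0 1. ?f y \<le> ?f y0"
    using continuous_attains_sup[OF compact_sphere ne cont] by blast
  have "y0 \<noteq> 0" using y0(1) by auto
  then have neg: "?f y0 < 0" using assms by (auto simp: neg_definite_def)
  show ?thesis
  proof (intro exI[of _ "- ?f y0"] conjI allI)
    show "0 < - ?f y0" using neg by simp
    fix y :: "real^'n"
    show "?f y \<le> - (- ?f y0) * (norm y)^2"
    proof (cases "y = 0")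
      case True then show ?thesis by simp
    next
      case False
      define n where "n = norm y"
      have n: "n > 0" using False by (simp add: n_def)
      define y' where "y' = (1/n) *\<^sub>R y"
      have y': "y' \<in> sphere 0 1" using n by (simp add: y'_def n_def)
      have yy: "y = n *\<^sub>R y'" using n by (simp add: y'_def)
      have "?f y = n^2 * ?f y'" unfolding yy
        by (simp add: matrix_vector_mult_scaleR power2_eq_square)
      also have "\<dots> \<le> n^2 * ?f y0" using y0(2) y' by (intro mult_left_mono) auto
      finally show ?thesis by (simp add: n_def mult.commute)
    qed
  qed
qed

lemma diag_inner:
  assumes "pos_diag L"
  shows "inner e (L *v w) = (\<Sum>i\<in>UNIV. L$i$i * e$i * w$i)"
  by (simp add: inner_vec_def diag_mult[OF assms] mult_ac)

lemma M_ident: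
  assumes L: "pos_diag L"
  shows "inner e ((transpose A ** L + L ** A) *v e) = 2 * inner e (L *v (A *v e))"
proof -
  have "(transpose A ** L + L ** A) *v e = transpose A *v (L *v e) + L *v (A *v e)"
    by (simp add: matrix_vector_mult_add_rdistrib matrix_vector_mul_assoc)
  then have "inner e ((transpose A ** L + L ** A) *v e) = inner e ((L *v e) v* A) + inner e (L *v (A *v e))"
    by (simp add: inner_add_right)
  also have "inner e ((L *v e) v* A) = inner (L *v e) (A *v e)"
    by (metis dot_lmul_matrix inner_commute)
  also have "\<dots> = inner e (L *v (A *v e))"
    by (simp add: inner_vec_def diag_mult[OF L] mult_ac)
  finally show ?thesis by simp
qed



lemma clamp_fix:
  assumes "0 < b" "0 \<le> q" "q \<le> b" "max 0 (min b (q + w)) = q"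
  shows "pc b q w = 0"
  using assms by (auto simp: pc_def max_def min_def split: if_splits)

lemma eq_exists:
  fixes D A :: "real^'n^'n"
  assumes D: "pos_diag D"
  shows "\<exists>xs\<in>box_set D. pp D xs (A *v xs + u) = 0"
proof -
  define F where "F y = (\<chi> i. max 0 (min (bx D $ i) (y$i + (A *v y + u)$i)))" for y :: "real^'n"
  have "0 \<in> box_set D" using bx_pos[OF D] by (auto simp: box_i[OF D] less_imp_le)
  then have S: "compact (box_set D)" "convex (box_set D)" "box_set D \<noteq> {}"
    using box_eq[OF D] by auto
  have cont: "continuous_on (box_set D) F" unfolding F_def
    by (intro continuous_intros)
  have "F \<in> box_set D \<rightarrow> box_set D"
    using bx_pos[OF D] by (auto simp: box_i[OF D] F_def less_imp_le)
  then obtain xs where xs: "xs \<in> box_set D" "F xs = xs" using brouwer[OF S cont] by blast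
  have "pp D xs (A *v xs + u) = 0"
  proof (rule vec_eq_iff[THEN iffD2], rule allI)
    fix i
    have "max 0 (min (bx D $ i) (xs$i + (A *v xs + u)$i)) = xs$i"
      using xs(2) by (simp add: F_def vec_eq_iff)
    moreover have "0 \<le> xs$i" "xs$i \<le> bx D $ i" using xs(1) box_i[OF D] by auto
    ultimately show "pp D xs (A *v xs + u) $ i = 0 $ i"
      using clamp_fix[OF bx_pos[OF D]] by (simp add: pp_def)
  qed
  then show ?thesis using xs(1) by blast
qed

lemma eq_unique:
  fixes D A L :: "real^'n^'n"
  assumes D: "pos_diag D" and L: "pos_diag L" and N: "neg_definite (transpose A ** L + L ** A)"
    and q1: "q1 \<in> box_set D" "pp D q1 (A *v q1 + u) = 0"
    and q2: "q2 \<in> box_set D" "pp D q2 (A *v q2 + u) = 0"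
  shows "q1 = q2"
proof (rule ccontr)
  assume ne: "q1 \<noteq> q2"
  define e where "e = q1 - q2"
  have "e \<noteq> 0" using ne by (simp add: e_def)
  then have neg: "inner e ((transpose A ** L + L ** A) *v e) < 0" using N by (simp add: neg_definite_def)
  have Ae: "A *v e = (A *v q1 + u) - (A *v q2 + u)" by (simp add: e_def matrix_vector_mult_diff_distrib)
  have t: "0 \<le> L$i$i * e$i * (A *v e)$i" for i
  proof -
    have a: "(q2$i - q1$i) * (A *v q1 + u)$i \<le> 0" by (rule vi_ineq[OF D q1 q2(1)])
    have b: "(q1$i - q2$i) * (A *v q2 + u)$i \<le> 0" by (rule vi_ineq[OF D q2 q1(1)])
    have "0 \<le> e$i * (A *v e)$i" using a b unfolding Ae e_def by (simp add: algebra_simps)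
    moreover have "L$i$i > 0" using L by (simp add: pos_diag_def)
    ultimately show ?thesis by (simp add: mult.assoc)
  qed
  have "0 \<le> inner e (L *v (A *v e))" unfolding diag_inner[OF L] by (intro sum_nonneg t)
  with neg show False unfolding M_ident[OF L] by simp
qed

lemma key_ineq:
  fixes D A L :: "real^'n^'n"
  assumes D: "pos_diag D" and L: "pos_diag L"
    and c: "\<forall>y. inner y ((transpose A ** L + L ** A) *v y) \<le> - c * (norm y)^2"
    and xs: "xs \<in> box_set D" "pp D xs (A *v xs + u) = 0"
    and x: "x \<in> box_set D"
  shows "(\<Sum>i\<in>UNIV. L$i$i * (x$i - xs$i) * pp D x (A *v x + u) $ i) \<le> - (c/2) * (norm (x - xs))^2"
proof -
  define e where "e = x - xs"
  define v where "v = A *v x + u"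
  define vs where "vs = A *v xs + u"
  have Lp: "L$i$i > 0" for i using L by (simp add: pos_diag_def)
  have "(\<Sum>i\<in>UNIV. L$i$i * (x$i - xs$i) * pp D x v $ i) \<le> (\<Sum>i\<in>UNIV. L$i$i * (x$i - xs$i) * (v$i - vs$i))"
  proof (rule sum_mono)
    fix i
    have a: "(x$i - xs$i) * (pp D x v $ i - v$i) \<le> 0" by (rule proj_ineq[OF D x xs(1)])
    have b: "(x$i - xs$i) * vs$i \<le> 0" unfolding vs_def by (rule vi_ineq[OF D xs x])
    have "(x$i - xs$i) * pp D x v $ i \<le> (x$i - xs$i) * (v$i - vs$i)"
      using a b by (simp add: algebra_simps)
    then show "L$i$i * (x$i - xs$i) * pp D x v $ i \<le> L$i$i * (x$i - xs$i) * (v$i - vs$i)"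
      using Lp[of i] by (simp add: mult.assoc mult_left_mono)
  qed
  also have "\<dots> = inner e (L *v (A *v e))"
    unfolding diag_inner[OF L] by (simp add: e_def v_def vs_def matrix_vector_mult_diff_distrib)
  also have "\<dots> = inner e ((transpose A ** L + L ** A) *v e) / 2" unfolding M_ident[OF L] by simp
  also have "\<dots> \<le> - (c/2) * (norm e)^2" using c[rule_format, of e] by simp
  finally show ?thesis by (simp add: e_def v_def)
qed



lemma ac_family:
  fixes f :: "real \<Rightarrow> real" and Q :: "real set set"
  assumes fin: "finite Q"
    and iv: "\<And>K. K \<in> Q \<Longrightarrow> \<exists>l r. K = {l..r} \<and> l < r \<and> a \<le> l \<and> r \<le> b"
    and disj: "\<And>K K'. K \<in> Q \<Longrightarrow> K' \<in> Q \<Longrightarrow> K \<noteq> K' \<Longrightarrow> interior K \<inter> interior K' = {}"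
    and meas: "measure lebesgue (\<Union>Q) < \<delta>"
    and acd: "\<forall>(m::nat) (l::nat\<Rightarrow>real) r. (\<forall>k<m. a \<le> l k \<and> l k \<le> r k \<and> r k \<le> b) \<and>
        (\<forall>i<m. \<forall>j<m. i \<noteq> j \<longrightarrow> r i \<le> l j \<or> r j \<le> l i) \<and> (\<Sum>k<m. r k - l k) < \<delta>
        \<longrightarrow> (\<Sum>k<m. norm (f (r k) - f (l k))) < \<epsilon>"
  shows "(\<Sum>K\<in>Q. \<bar>f (Sup K) - f (Inf K)\<bar>) < \<epsilon>"
proof -
  have Kiv: "K = {Inf K..Sup K} \<and> Inf K < Sup K \<and> a \<le> Inf K \<and> Sup K \<le> b" if "K \<in> Q" for K
    using iv[OF that] by auto
  have sep: "Sup K \<le> Inf K' \<or> Sup K' \<le> Inf K" if "K \<in> Q" "K' \<in> Q" "K \<noteq> K'" for K K'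
  proof (rule ccontr)
    assume "\<not> (Sup K \<le> Inf K' \<or> Sup K' \<le> Inf K)"
    then have h: "Inf K' < Sup K" "Inf K < Sup K'" by auto
    define z where "z = (max (Inf K) (Inf K') + min (Sup K) (Sup K')) / 2"
    have i1: "interior K = {Inf K<..<Sup K}" by (metis Kiv[OF that(1)] interior_atLeastAtMost_real)
    have i2: "interior K' = {Inf K'<..<Sup K'}" by (metis Kiv[OF that(2)] interior_atLeastAtMost_real)
    have "z \<in> interior K" "z \<in> interior K'" unfolding i1 i2
      using Kiv[OF that(1)] Kiv[OF that(2)] h by (auto simp: z_def max_def min_def)
    then show False using disj[OF that] by blast
  qed
  obtain g where g: "bij_betw g {0..<card Q} Q" using ex_bij_betw_nat_finite[OF fin] by blast
  define m where "m = card Q"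
  define l where "l k = Inf (g k)" for k
  define r where "r k = Sup (g k)" for k
  have gQ: "g k \<in> Q" if "k < m" for k using g that by (auto simp: m_def bij_betw_def)
  have ginj: "g i \<noteq> g j" if "i < m" "j < m" "i \<noteq> j" for i j
    using g that by (auto simp: m_def bij_betw_def inj_on_def)
  have c1: "\<forall>k<m. a \<le> l k \<and> l k \<le> r k \<and> r k \<le> b"
    using Kiv gQ by (auto simp: l_def r_def less_imp_le)
  have c2: "\<forall>i<m. \<forall>j<m. i \<noteq> j \<longrightarrow> r i \<le> l j \<or> r j \<le> l i"
    using sep gQ ginj by (auto simp: l_def r_def)
  have sumQ: "(\<Sum>k<m. h (g k)) = (\<Sum>K\<in>Q. h K)" for h :: "real set \<Rightarrow> real"
    unfolding m_def lessThan_atLeast0 by (rule sum.reindex_bij_betw[OF g])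
  have mK: "measure lebesgue K = Sup K - Inf K" if "K \<in> Q" for K
  proof -
    have "K = {Inf K..Sup K}" "Inf K < Sup K" using Kiv[OF that] by auto
    then show ?thesis by (metis less_imp_le measure_lborel_Icc measure_completion sets_lborel atLeastAtMost_borel)
  qed
  have pw: "pairwise (\<lambda>S T. negligible (S \<inter> T)) Q"
  proof (rule pairwiseI)
    fix S T assume st: "S \<in> Q" "T \<in> Q" "S \<noteq> T"
    have "S \<inter> T \<subseteq> {Sup S, Sup T}"
      using sep[OF st] Kiv[OF st(1)] Kiv[OF st(2)]
      by (smt (verit, best) Int_iff atLeastAtMost_iff insertCI subsetI)
    then show "negligible (S \<inter> T)" by (rule negligible_subset[rotated]) auto
  qed
  have "(\<Sum>k<m. r k - l k) = (\<Sum>K\<in>Q. Sup K - Inf K)"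
    unfolding r_def l_def by (rule sumQ)
  also have "\<dots> = (\<Sum>K\<in>Q. measure lebesgue K)" using mK by simp
  also have "\<dots> = measure lebesgue (\<Union>Q)"
    by (rule measure_negligible_finite_Union[symmetric, OF fin _ pw])
       (metis Kiv lmeasurable_cbox cbox_interval)
  finally have c3: "(\<Sum>k<m. r k - l k) < \<delta>" using meas by simp
  have "(\<Sum>k<m. norm (f (r k) - f (l k))) < \<epsilon>" using acd c1 c2 c3 by blast
  moreover have "(\<Sum>k<m. norm (f (r k) - f (l k))) = (\<Sum>K\<in>Q. \<bar>f (Sup K) - f (Inf K)\<bar>)"
    unfolding r_def l_def real_norm_def by (rule sumQ)
  ultimately show ?thesis by simp
qed



lemma ac_mono:
  fixes f f' :: "real \<Rightarrow> real"
  assumes ab: "a \<le> b" and ac: "abs_continuous_on a b f" and N: "negligible N"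
    and der: "\<And>t. t \<in> {a..b} - N \<Longrightarrow> (f has_real_derivative f' t) (at t within {a..b})"
    and neg: "\<And>t. t \<in> {a..b} - N \<Longrightarrow> f' t \<le> 0"
  shows "f b \<le> f a"
proof -
  have key: "f b - f a \<le> \<epsilon> * (b - a) + \<epsilon>" if \<epsilon>: "\<epsilon> > 0" for \<epsilon>
  proof -
    obtain \<delta> where \<delta>: "\<delta> > 0" and acd: "\<forall>(m::nat) (l::nat\<Rightarrow>real) r. (\<forall>k<m. a \<le> l k \<and> l k \<le> r k \<and> r k \<le> b) \<and>
        (\<forall>i<m. \<forall>j<m. i \<noteq> j \<longrightarrow> r i \<le> l j \<or> r j \<le> l i) \<and> (\<Sum>k<m. r k - l k) < \<delta>
        \<longrightarrow> (\<Sum>k<m. norm (f (r k) - f (l k))) < \<epsilon>"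
      using ac \<epsilon> unfolding abs_continuous_on_def by blast
    have Nl: "N \<in> sets lebesgue" by (rule negligible_imp_sets[OF N])
    obtain T where T: "open T" "N \<subseteq> T" "(T - N) \<in> lmeasurable" "emeasure lebesgue (T - N) < ennreal \<delta>"
      using sets_lebesgue_outer_open[OF Nl \<delta>] by blast
    have N0: "emeasure lebesgue N = 0" using N negligible_iff_emeasure0 Nl by blast
    have TU: "T = (T - N) \<union> N" using T(2) by blast
    have "(T - N) \<union> N \<in> sets lebesgue" by (rule sets.Un[OF fmeasurableD[OF T(3)] Nl])
    then have Ts: "T \<in> sets lebesgue" using TU by simp
    have "emeasure lebesgue ((T - N) \<union> N) \<le> emeasure lebesgue (T - N) + emeasure lebesgue N"
      by (rule emeasure_subadditive) (use T(3) Nl in auto)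
    then have "emeasure lebesgue T \<le> emeasure lebesgue (T - N) + emeasure lebesgue N" using TU by simp
    then have Tm: "emeasure lebesgue T < ennreal \<delta>" using T(4) N0 by simp
    have smallU: "measure lebesgue U < \<delta>" if "U \<subseteq> T" "U \<in> lmeasurable" for U
    proof -
      have "emeasure lebesgue U \<le> emeasure lebesgue T" by (rule emeasure_mono[OF that(1) Ts])
      then have "ennreal (measure lebesgue U) < ennreal \<delta>"
        using Tm emeasure_eq_measure2[OF that(2)] by simp
      then show ?thesis by (simp add: ennreal_less_iff)
    qed
    have exN: "\<exists>d>0. ball t d \<subseteq> T" if "t \<in> N" for t
      using T(1) T(2) that open_contains_ball by blast
    have exD: "\<exists>d>0. \<forall>s\<in>{a..b}. \<bar>s - t\<bar> < d \<longrightarrow> \<bar>f s - f t - f' t * (s - t)\<bar> \<le> \<epsilon> * \<bar>s - t\<bar>"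
      if "t \<in> {a..b} - N" for t
      using der[OF that] \<epsilon> unfolding has_field_derivative_def has_derivative_within_alt
      by (auto simp: real_norm_def mult.commute)
    define \<gamma> where "\<gamma> t = (if t \<in> N then (SOME d. d > 0 \<and> ball t d \<subseteq> T)
        else if t \<in> {a..b} then (SOME d. d>0 \<and> (\<forall>s\<in>{a..b}. \<bar>s - t\<bar> < d \<longrightarrow> \<bar>f s - f t - f' t * (s - t)\<bar> \<le> \<epsilon> * \<bar>s - t\<bar>))
        else 1)" for t
    have \<gamma>N: "\<gamma> t > 0 \<and> ball t (\<gamma> t) \<subseteq> T" if "t \<in> N" for t
      using someI_ex[OF exN[OF that]] that by (simp add: \<gamma>_def)
    have \<gamma>D: "\<gamma> t > 0 \<and> (\<forall>s\<in>{a..b}. \<bar>s - t\<bar> < \<gamma> t \<longrightarrow> \<bar>f s - f t - f' t * (s - t)\<bar> \<le> \<epsilon> * \<bar>s - t\<bar>)"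
      if "t \<in> {a..b} - N" for t
      using someI_ex[OF exD[OF that]] that by (simp add: \<gamma>_def)
    have \<gamma>pos: "\<forall>t. 0 < \<gamma> t" using \<gamma>N \<gamma>D by (auto simp: \<gamma>_def)
    obtain p where p: "p tagged_division_of {a..b}" and fine: "(\<lambda>t. ball t (\<gamma> t)) fine p"
      using fine_division_exists[OF gauge_ball_dependent[OF \<gamma>pos], of a b] by (auto simp: cbox_interval)
    have finp: "finite p" using tagged_division_ofD(1)[OF p] .
    have pK: "t \<in> K \<and> K \<subseteq> {a..b} \<and> K = {Inf K..Sup K} \<and> Inf K \<le> Sup K \<and> K \<subseteq> ball t (\<gamma> t)"
      if tK0: "(t, K) \<in> p" for t K
    proof -
      have "t \<in> K" "K \<subseteq> {a..b}" using tagged_division_ofD(2,3)[OF p tK0] by auto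
      moreover obtain u w where "K = cbox u w" using tagged_division_ofD(4)[OF p tK0] by blast
      moreover have "K \<subseteq> ball t (\<gamma> t)" using fine tK0 by (auto simp: fine_def)
      ultimately show ?thesis by (auto simp: cbox_interval)
    qed
    define F where "F z = f (Sup (snd z)) - f (Inf (snd z))" for z :: "real \<times> real set"
    have tot: "f b - f a = sum F p"
      using additive_tagged_division_1[OF ab p, of f] by (simp add: F_def case_prod_unfold)
    define B where "B = {z :: real \<times> real set. fst z \<in> N}"
    have split: "sum F p = sum F (p \<inter> B) + sum F (p - B)" by (rule sum.Int_Diff[OF finp])
    have good: "F (t, K) \<le> \<epsilon> * measure lborel K" if "(t, K) \<in> p - B" for t K
    proof -
      have tK: "(t, K) \<in> p" "t \<notin> N" using that by (auto simp: B_def)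
      define u where "u = Inf K"
      define w where "w = Sup K"
      have kt: "t \<in> K" and kab: "K \<subseteq> {a..b}" and kK: "K = {u..w}" and kuw: "u \<le> w"
        and kb: "K \<subseteq> ball t (\<gamma> t)"
        using pK[OF tK(1)] unfolding u_def w_def by blast+
      have uK: "u \<in> K" "w \<in> K" using kK kuw by auto
      have uw: "u \<le> t" "t \<le> w" "a \<le> u" "w \<le> b" using kt kK uK kab by auto
      have tab: "t \<in> {a..b} - N" using uw tK by auto
      have "w \<in> ball t (\<gamma> t)" "u \<in> ball t (\<gamma> t)" using uK kb by auto
      then have d: "\<bar>w - t\<bar> < \<gamma> t" "\<bar>u - t\<bar> < \<gamma> t" by (auto simp: dist_real_def abs_minus_commute)
      have wab: "w \<in> {a..b}" "u \<in> {a..b}" using uw by auto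
      have e1: "\<bar>f w - f t - f' t * (w - t)\<bar> \<le> \<epsilon> * \<bar>w - t\<bar>" using \<gamma>D[OF tab] d(1) wab(1) by blast
      have e2: "\<bar>f u - f t - f' t * (u - t)\<bar> \<le> \<epsilon> * \<bar>u - t\<bar>" using \<gamma>D[OF tab] d(2) wab(2) by blast
      have n: "f' t \<le> 0" by (rule neg[OF tab])
      have "f' t * (w - t) \<le> 0" using n uw by (simp add: mult_nonpos_nonneg)
      moreover have "f' t * (u - t) \<ge> 0" using n uw by (simp add: mult_nonpos_nonpos)
      ultimately have "f w - f u \<le> \<epsilon> * (w - u)" using e1 e2 uw by (auto simp: abs_le_iff algebra_simps)
      moreover have "measure lborel K = w - u" using kK kuw by (simp add: content_real)
      ultimately show ?thesis by (simp add: F_def u_def w_def)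
    qed
    have "sum F (p - B) \<le> (\<Sum>(t,K)\<in>p - B. \<epsilon> * measure lborel K)"
      by (rule sum_mono) (use good in auto)
    also have "\<dots> = \<epsilon> * (\<Sum>(t,K)\<in>p - B. measure lborel K)" by (simp add: sum_distrib_left case_prod_unfold)
    also have "(\<Sum>(t,K)\<in>p - B. measure lborel K) \<le> (\<Sum>(t,K)\<in>p. measure lborel K)"
      by (rule sum_mono2[OF finp]) auto
    also have "(\<Sum>(t,K)\<in>p. measure lborel K) = b - a"
      using additive_content_tagged_division[of p a b] p ab by (simp add: cbox_interval)
    finally have part2: "sum F (p - B) \<le> \<epsilon> * (b - a)" using \<epsilon> by (simp add: mult_left_mono)
    define P where "P = {z \<in> p \<inter> B. Inf (snd z) < Sup (snd z)}"
    have finP: "finite P" using finp by (simp add: P_def)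
    have "sum F (p \<inter> B) = sum F P"
    proof (rule sum.mono_neutral_right)
      show "finite (p \<inter> B)" using finp by simp
      show "P \<subseteq> p \<inter> B" by (auto simp: P_def)
      show "\<forall>i\<in>p \<inter> B - P. F i = 0"
      proof
        fix z assume "z \<in> p \<inter> B - P"
        then have "z \<in> p" "\<not> Inf (snd z) < Sup (snd z)" by (auto simp: P_def)
        moreover have "Inf (snd z) \<le> Sup (snd z)" using pK[of "fst z" "snd z"] \<open>z \<in> p\<close> by (metis prod.collapse)
        ultimately show "F z = 0" by (simp add: F_def)
      qed
    qed
    also have "\<dots> \<le> (\<Sum>z\<in>P. \<bar>F z\<bar>)" by (rule sum_mono) simp
    also have "\<dots> = (\<Sum>K\<in>snd ` P. \<bar>f (Sup K) - f (Inf K)\<bar>)"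
    proof -
      have "inj_on snd P"
      proof (rule inj_onI)
        fix z1 z2 assume z: "z1 \<in> P" "z2 \<in> P" "snd z1 = snd z2"
        show "z1 = z2"
        proof (rule ccontr)
          assume ne: "z1 \<noteq> z2"
          have "z1 \<in> p" "z2 \<in> p" using z by (auto simp: P_def)
          then have "interior (snd z1) \<inter> interior (snd z2) = {}"
            using p ne tagged_division_ofD(5)[OF p, of "fst z1" "snd z1" "fst z2" "snd z2"] by simp
          then have "interior (snd z1) = {}" using z(3) by simp
          moreover have "snd z1 = {Inf (snd z1)..Sup (snd z1)}"
            using pK[of "fst z1" "snd z1"] \<open>z1 \<in> p\<close> by (metis prod.collapse)
          moreover have "Inf (snd z1) < Sup (snd z1)" using z(1) by (simp add: P_def)
          ultimately show False by (metis greaterThanLessThan_empty_iff interior_atLeastAtMost_real not_le)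
        qed
      qed
      then show ?thesis by (simp add: sum.reindex F_def)
    qed
    also have "\<dots> < \<epsilon>"
    proof (rule ac_family[OF _ _ _ _ acd])
      show "finite (snd ` P)" using finP by simp
      show "\<exists>l r. K = {l..r} \<and> l < r \<and> a \<le> l \<and> r \<le> b" if KP: "K \<in> snd ` P" for K
      proof -
        obtain t where tK: "(t, K) \<in> P" using KP by force
        then have "(t, K) \<in> p" "Inf K < Sup K" by (auto simp: P_def)
        note k = pK[OF this(1)]
        have "a \<le> Inf K" "Sup K \<le> b" using k \<open>Inf K < Sup K\<close> by (metis atLeastAtMost_iff order_refl subsetD less_imp_le)+
        then show ?thesis using k \<open>Inf K < Sup K\<close> by blast
      qed
      show "interior K \<inter> interior K' = {}" if KK: "K \<in> snd ` P" "K' \<in> snd ` P" "K \<noteq> K'" for K K'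
      proof -
        obtain t t' where "(t, K) \<in> P" "(t', K') \<in> P" using KK(1,2) by force
        then have "(t, K) \<in> p" "(t', K') \<in> p" by (auto simp: P_def)
        then show ?thesis using tagged_division_ofD(5)[OF p] KK(3) by blast
      qed
      have sub: "\<Union>(snd ` P) \<subseteq> T"
      proof
        fix x assume "x \<in> \<Union>(snd ` P)"
        then obtain t K where tK: "(t, K) \<in> P" "x \<in> K" by force
        then have "(t, K) \<in> p" "t \<in> N" by (auto simp: P_def B_def)
        then show "x \<in> T" using pK \<gamma>N tK(2) by blast
      qed
      have lm: "\<Union>(snd ` P) \<in> lmeasurable"
      proof (rule fmeasurable.finite_Union)
        show "finite (snd ` P)" using finP by simp
        show "snd ` P \<subseteq> lmeasurable"
        proof
          fix K assume "K \<in> snd ` P"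
          then obtain t where "(t, K) \<in> p" by (force simp: P_def)
          then show "K \<in> lmeasurable" using pK by (metis lmeasurable_cbox cbox_interval)
        qed
      qed
      show "measure lebesgue (\<Union>(snd ` P)) < \<delta>" by (rule smallU[OF sub lm])
    qed
    finally have part1: "sum F (p \<inter> B) < \<epsilon>" .
    show ?thesis using tot split part1 part2 by linarith
  qed
  show ?thesis
  proof (rule ccontr)
    assume "\<not> f b \<le> f a"
    then have d: "f b - f a > 0" by simp
    define \<epsilon> where "\<epsilon> = (f b - f a) / (2 * (b - a + 1))"
    have e: "\<epsilon> > 0" using d ab by (simp add: \<epsilon>_def)
    have c: "b - a + 1 > 0" using ab by simp
    have "\<epsilon> * (b - a) + \<epsilon> = \<epsilon> * (b - a + 1)" by (simp add: algebra_simps)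
    also have "\<dots> = (f b - f a) / 2" unfolding \<epsilon>_def using c by (simp add: field_simps)
    finally have h: "\<epsilon> * (b - a) + \<epsilon> = (f b - f a) / 2" .
    have "f b - f a \<le> (f b - f a) / 2" using key[OF e] unfolding h .
    then show False using d by (auto simp: field_simps)
  qed
qed



lemma vec_comp_deriv:
  assumes "(x has_vector_derivative d) F"
  shows "((\<lambda>s. x s $ i) has_real_derivative d $ i) F"
proof -
  have "((\<lambda>s. x s $ i) has_derivative (\<lambda>h. (h *\<^sub>R d) $ i)) F"
    using bounded_linear.has_derivative[OF bounded_linear_vec_nth, of x "\<lambda>h. h *\<^sub>R d" F i] assms
    unfolding has_vector_derivative_def by simp
  moreover have "(\<lambda>h. (h *\<^sub>R d) $ i) = (*) (d $ i)" by (auto simp: fun_eq_iff)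
  ultimately show ?thesis unfolding has_field_derivative_def by simp
qed

lemma ac_comp:
  fixes x :: "real \<Rightarrow> 'a::real_normed_vector" and h :: "real \<Rightarrow> real"
  assumes ac: "abs_continuous_on a b x" and K: "K > 0"
    and lip: "\<And>s t. s \<in> {a..b} \<Longrightarrow> t \<in> {a..b} \<Longrightarrow> \<bar>h s - h t\<bar> \<le> K * norm (x s - x t) + K * \<bar>s - t\<bar>"
  shows "abs_continuous_on a b h"
  unfolding abs_continuous_on_def
proof (intro allI impI)
  fix \<epsilon> :: real assume e: "\<epsilon> > 0"
  then have e2: "\<epsilon> / (2 * K) > 0" using K by simp
  obtain \<delta>1 where d1: "\<delta>1 > 0" and acd: "\<forall>(m::nat) (l::nat\<Rightarrow>real) r. (\<forall>k<m. a \<le> l k \<and> l k \<le> r k \<and> r k \<le> b) \<and>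
        (\<forall>i<m. \<forall>j<m. i \<noteq> j \<longrightarrow> r i \<le> l j \<or> r j \<le> l i) \<and> (\<Sum>k<m. r k - l k) < \<delta>1
        \<longrightarrow> (\<Sum>k<m. norm (x (r k) - x (l k))) < \<epsilon> / (2 * K)"
    using ac e2 unfolding abs_continuous_on_def by blast
  show "\<exists>\<delta>>0. \<forall>(m::nat) (l::nat\<Rightarrow>real) r. (\<forall>k<m. a \<le> l k \<and> l k \<le> r k \<and> r k \<le> b) \<and>
        (\<forall>i<m. \<forall>j<m. i \<noteq> j \<longrightarrow> r i \<le> l j \<or> r j \<le> l i) \<and> (\<Sum>k<m. r k - l k) < \<delta>
        \<longrightarrow> (\<Sum>k<m. norm (h (r k) - h (l k))) < \<epsilon>"
  proof (intro exI[of _ "min \<delta>1 (\<epsilon> / (2 * K))"] conjI allI impI)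
    show "0 < min \<delta>1 (\<epsilon> / (2 * K))" using d1 e2 by simp
    fix m :: nat and l r :: "nat \<Rightarrow> real"
    assume H: "(\<forall>k<m. a \<le> l k \<and> l k \<le> r k \<and> r k \<le> b) \<and>
        (\<forall>i<m. \<forall>j<m. i \<noteq> j \<longrightarrow> r i \<le> l j \<or> r j \<le> l i) \<and> (\<Sum>k<m. r k - l k) < min \<delta>1 (\<epsilon> / (2 * K))"
    then have sx: "(\<Sum>k<m. norm (x (r k) - x (l k))) < \<epsilon> / (2 * K)" using acd by auto
    have sl: "(\<Sum>k<m. r k - l k) < \<epsilon> / (2 * K)" using H by auto
    have "(\<Sum>k<m. norm (h (r k) - h (l k))) \<le> (\<Sum>k<m. K * norm (x (r k) - x (l k)) + K * (r k - l k))"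
    proof (rule sum_mono)
      fix k assume "k \<in> {..<m}"
      then have "a \<le> l k" "l k \<le> r k" "r k \<le> b" using H by auto
      then show "norm (h (r k) - h (l k)) \<le> K * norm (x (r k) - x (l k)) + K * (r k - l k)"
        using lip[of "r k" "l k"] by auto
    qed
    also have "\<dots> = K * (\<Sum>k<m. norm (x (r k) - x (l k))) + K * (\<Sum>k<m. r k - l k)"
      by (simp add: sum.distrib sum_distrib_left)
    also have "\<dots> < K * (\<epsilon> / (2 * K)) + K * (\<epsilon> / (2 * K))"
      using sx sl K by (intro add_strict_mono mult_strict_left_mono) auto
    also have "\<dots> = \<epsilon>" using K by (simp add: field_simps)
    finally show "(\<Sum>k<m. norm (h (r k) - h (l k))) < \<epsilon>" .
  qed
qed

lemma exp_lip:
  fixes c s t T :: real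
  assumes "c \<ge> 0" "0 \<le> s" "s \<le> T" "0 \<le> t" "t \<le> T"
  shows "\<bar>exp (c * s) - exp (c * t)\<bar> \<le> c * exp (c * T) * \<bar>s - t\<bar>"
proof -
  have gen: "exp (c * q) - exp (c * p) \<le> c * exp (c * T) * (q - p)" if "p \<le> q" "q \<le> T" for p q
  proof -
    have "1 - c * (q - p) \<le> exp (- (c * (q - p)))" using exp_ge_add_one_self[of "- (c * (q - p))"] by simp
    then have "exp (c * q) * (1 - exp (- (c * (q - p)))) \<le> exp (c * q) * (c * (q - p))"
      by (intro mult_left_mono) auto
    moreover have "exp (c * q) * exp (- (c * (q - p))) = exp (c * p)"
      by (simp add: exp_add[symmetric] algebra_simps)
    ultimately have "exp (c * q) - exp (c * p) \<le> exp (c * q) * (c * (q - p))"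
      by (simp add: algebra_simps)
    also have "\<dots> \<le> exp (c * T) * (c * (q - p))"
      using that assms(1) by (intro mult_right_mono) (auto intro: mult_left_mono)
    finally show ?thesis by (simp add: mult_ac)
  qed
  show ?thesis
  proof (cases "t \<le> s")
    case True
    have "exp (c * t) \<le> exp (c * s)" using True assms(1) by (simp add: mult_left_mono)
    then show ?thesis using gen[OF True assms(3)] True by simp
  next
    case False
    have "exp (c * s) \<le> exp (c * t)" using False assms(1) by (simp add: mult_left_mono)
    then show ?thesis using gen[of s t] False assms(5) by simp
  qed
qed



definition Vf :: "real^'n^'n \<Rightarrow> real^'n \<Rightarrow> real^'n \<Rightarrow> real" where
  "Vf L xs y = (\<Sum>i\<in>UNIV. L$i$i * (y$i - xs$i)^2)"

lemma wnorm_V: "pos_diag L \<Longrightarrow> wnorm L (y - xs) = sqrt (Vf L xs y)"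
  unfolding wnorm_def Vf_def by (simp add: diag_inner power2_eq_square mult_ac)

lemma V_nonneg: "pos_diag L \<Longrightarrow> 0 \<le> Vf L xs y"
  unfolding Vf_def pos_diag_def by (intro sum_nonneg) (simp add: less_imp_le)

lemma V_norm:
  assumes L: "pos_diag L"
  shows "Vf L xs y \<le> (\<Sum>i\<in>UNIV. L$i$i) * (norm (y - xs))^2"
proof -
  have Lp: "\<And>i. 0 < L$i$i" using L by (simp add: pos_diag_def)
  have le: "L$i$i \<le> (\<Sum>i\<in>UNIV. L$i$i)" for i
    by (rule member_le_sum) (auto simp: Lp less_imp_le)
  have "Vf L xs y \<le> (\<Sum>i\<in>UNIV. (\<Sum>i\<in>UNIV. L$i$i) * (y$i - xs$i)^2)"
    unfolding Vf_def by (intro sum_mono mult_right_mono le) auto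
  also have "\<dots> = (\<Sum>i\<in>UNIV. L$i$i) * (norm (y - xs))^2"
    by (simp add: norm2_sum sum_distrib_left)
  finally show ?thesis .
qed

lemma V_box:
  assumes L: "pos_diag L" and D: "pos_diag D" and y: "y \<in> box_set D" and xs: "xs \<in> box_set D"
  shows "Vf L xs y \<le> (\<Sum>i\<in>UNIV. L$i$i * (bx D $ i)^2)"
  unfolding Vf_def
proof (rule sum_mono)
  fix i
  have "0 \<le> y$i" "y$i \<le> bx D $ i" "0 \<le> xs$i" "xs$i \<le> bx D $ i" using y xs box_i[OF D] by auto
  then have "\<bar>y$i - xs$i\<bar> \<le> bx D $ i" by auto
  then have "(y$i - xs$i)^2 \<le> (bx D $ i)^2"
    by (metis abs_ge_zero order_trans power2_abs power_mono)
  moreover have "0 \<le> L$i$i" using L by (simp add: pos_diag_def less_imp_le)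
  ultimately show "L$i$i * (y$i - xs$i)^2 \<le> L$i$i * (bx D $ i)^2" by (rule mult_left_mono)
qed

lemma V_lip:
  assumes L: "pos_diag L" and D: "pos_diag D" and y: "y \<in> box_set D" and z: "z \<in> box_set D" and xs: "xs \<in> box_set D"
  shows "\<bar>Vf L xs y - Vf L xs z\<bar> \<le> (\<Sum>i\<in>UNIV. 2 * L$i$i * bx D $ i) * norm (y - z)"
proof -
  have "Vf L xs y - Vf L xs z = (\<Sum>i\<in>UNIV. L$i$i * ((y$i - z$i) * (y$i + z$i - 2 * xs$i)))"
    unfolding Vf_def sum_subtractf[symmetric] by (intro sum.cong) (auto simp: power2_eq_square algebra_simps)
  also have "\<bar>\<dots>\<bar> \<le> (\<Sum>i\<in>UNIV. \<bar>L$i$i * ((y$i - z$i) * (y$i + z$i - 2 * xs$i))\<bar>)" by (rule sum_abs)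
  also have "\<dots> \<le> (\<Sum>i\<in>UNIV. 2 * L$i$i * bx D $ i * norm (y - z))"
  proof (rule sum_mono)
    fix i
    have "0 \<le> y$i" "y$i \<le> bx D $ i" "0 \<le> xs$i" "xs$i \<le> bx D $ i" "0 \<le> z$i" "z$i \<le> bx D $ i"
      using y z xs box_i[OF D] by auto
    then have a: "\<bar>y$i + z$i - 2 * xs$i\<bar> \<le> 2 * bx D $ i" by auto
    have b: "\<bar>y$i - z$i\<bar> \<le> norm (y - z)" using component_le_norm_cart[of "y - z" i] by simp
    have Lp: "0 < L$i$i" using L by (simp add: pos_diag_def)
    have "\<bar>L$i$i * ((y$i - z$i) * (y$i + z$i - 2 * xs$i))\<bar> = L$i$i * (\<bar>y$i - z$i\<bar> * \<bar>y$i + z$i - 2 * xs$i\<bar>)"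
      using Lp by (simp add: abs_mult)
    also have "\<dots> \<le> L$i$i * (norm (y - z) * (2 * bx D $ i))"
      using a b Lp by (intro mult_left_mono mult_mono) auto
    finally show "\<bar>L$i$i * ((y$i - z$i) * (y$i + z$i - 2 * xs$i))\<bar> \<le> 2 * L$i$i * bx D $ i * norm (y - z)"
      by (simp add: mult_ac)
  qed
  also have "\<dots> = (\<Sum>i\<in>UNIV. 2 * L$i$i * bx D $ i) * norm (y - z)" by (simp add: sum_distrib_right)
  finally show ?thesis .
qed

lemma prod_lip:
  fixes E1 E2 V1 V2 :: real
  assumes "\<bar>E1 - E2\<bar> \<le> a * dt" "0 \<le> V1" "V1 \<le> VB" "0 \<le> E2" "E2 \<le> ET" "\<bar>V1 - V2\<bar> \<le> CV * nx"
    "0 \<le> a" "0 \<le> dt" "0 \<le> CV" "0 \<le> nx"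
  shows "\<bar>E1 * V1 - E2 * V2\<bar> \<le> (a * VB) * dt + (ET * CV) * nx"
proof -
  have "E1 * V1 - E2 * V2 = (E1 - E2) * V1 + E2 * (V1 - V2)" by (simp add: algebra_simps)
  then have "\<bar>E1 * V1 - E2 * V2\<bar> \<le> \<bar>E1 - E2\<bar> * V1 + E2 * \<bar>V1 - V2\<bar>"
    using assms by (simp add: abs_mult) (metis abs_triangle_ineq abs_mult abs_of_nonneg)
  also have "\<dots> \<le> (a * dt) * VB + ET * (CV * nx)"
    using assms by (intro add_mono mult_mono) auto
  finally show ?thesis by (simp add: mult_ac)
qed



theorem theorem1:
  fixes D W L :: "real^'n^'n" and u :: "real^'n"
  assumes "pos_diag D" and "pos_diag L"
    and "neg_definite (transpose (W - D) ** L + L ** (W - D))"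
  shows "\<exists>xs. xs \<in> box_set D \<and> proj_tc (box_set D) xs ((W - D) *v xs + u) = 0
           \<and> (\<forall>y \<in> box_set D. proj_tc (box_set D) y ((W - D) *v y + u) = 0 \<longrightarrow> y = xs)
           \<and> (\<exists>\<mu>>0. \<forall>x. pds_solution (box_set D) (W - D) u x \<longrightarrow>
                 (\<forall>t\<ge>0. wnorm L (x t - xs) \<le> exp (- \<mu> * t) * wnorm L (x 0 - xs)))"
proof -
  define A where "A = W - D"
  have D: "pos_diag D" and L: "pos_diag L" using assms by auto
  have N: "neg_definite (transpose A ** L + L ** A)" using assms(3) by (simp add: A_def)
  obtain xs where xs: "xs \<in> box_set D" "pp D xs (A *v xs + u) = 0" using eq_exists[OF D] by blast
  obtain c where c: "c > 0" "\<forall>y. inner y ((transpose A ** L + L ** A) *v y) \<le> - c * (norm y)^2"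
    using negdef_const[OF N] by blast
  define Ls where "Ls = (\<Sum>i\<in>UNIV. L$i$i)"
  have Lp: "\<And>i. 0 < L$i$i" using L by (simp add: pos_diag_def)
  have Ls: "Ls > 0" unfolding Ls_def by (rule sum_pos) (auto simp: Lp)
  define \<mu> where "\<mu> = c / (2 * Ls)"
  have \<mu>: "\<mu> > 0" using c Ls by (simp add: \<mu>_def)
  have main: "wnorm L (x t - xs) \<le> exp (- \<mu> * t) * wnorm L (x 0 - xs)"
    if sol: "pds_solution (box_set D) A u x" and t: "0 \<le> t" for x t
  proof -
    have inX: "\<And>s. 0 \<le> s \<Longrightarrow> x s \<in> box_set D" using sol by (simp add: pds_solution_def)
    have acx: "abs_continuous_on 0 t x" using sol t by (simp add: pds_solution_def)
    have ae: "AE s in lborel. s \<ge> 0 \<longrightarrow> (x has_vector_derivative proj_tc (box_set D) (x s) (A *v x s + u)) (at s within {0..})"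
      using sol by (simp add: pds_solution_def)
    then have "AE s in lebesgue. s \<ge> 0 \<longrightarrow> (x has_vector_derivative proj_tc (box_set D) (x s) (A *v x s + u)) (at s within {0..})"
      by (rule AE_completion)
    then obtain Nn where Nn: "negligible Nn"
      and NnP: "{s. \<not> (s \<ge> 0 \<longrightarrow> (x has_vector_derivative proj_tc (box_set D) (x s) (A *v x s + u)) (at s within {0..}))} \<subseteq> Nn"
      unfolding eventually_ae_filter_negligible by blast
    define p where "p s = pp D (x s) (A *v x s + u)" for s
    define V where "V s = Vf L xs (x s)" for s
    define h where "h s = exp (2 * \<mu> * s) * V s" for s
    define h' where "h' s = exp (2 * \<mu> * s) * (2 * \<mu>) * V s + exp (2 * \<mu> * s) * (\<Sum>i\<in>UNIV. L$i$i * (2 * (x s $ i - xs $ i) * p s $ i))" for s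
    have der: "(h has_real_derivative h' s) (at s within {0..t})" if s: "s \<in> {0..t} - Nn" for s
    proof -
      have s0: "0 \<le> s" using s by auto
      have "(x has_vector_derivative proj_tc (box_set D) (x s) (A *v x s + u)) (at s within {0..})"
        using s NnP s0 by blast
      then have "(x has_vector_derivative p s) (at s within {0..})"
        using proj_eq[OF D inX[OF s0]] by (simp add: p_def)
      then have dx: "(x has_vector_derivative p s) (at s within {0..t})"
        by (rule has_vector_derivative_within_subset) auto
      have di: "((\<lambda>s. x s $ i) has_real_derivative p s $ i) (at s within {0..t})" for i
        by (rule vec_comp_deriv[OF dx])
      have dterm: "((\<lambda>s. L$i$i * (x s $ i - xs $ i)^2) has_real_derivative L$i$i * (2 * (x s $ i - xs $ i) * p s $ i)) (at s within {0..t})" for i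
        by (rule derivative_eq_intros di refl | simp)+
      have dV: "(V has_real_derivative (\<Sum>i\<in>UNIV. L$i$i * (2 * (x s $ i - xs $ i) * p s $ i))) (at s within {0..t})"
        unfolding V_def Vf_def by (rule DERIV_sum) (rule dterm)
      have dE: "((\<lambda>s. exp (2 * \<mu> * s)) has_real_derivative exp (2 * \<mu> * s) * (2 * \<mu>)) (at s within {0..t})"
        by (rule derivative_eq_intros refl | simp)+
      show ?thesis unfolding h_def h'_def
        using DERIV_mult[OF dE dV] by (simp add: algebra_simps)
    qed
    have negd: "h' s \<le> 0" if s: "s \<in> {0..t} - Nn" for s
    proof -
      have xsX: "x s \<in> box_set D" using s inX by auto
      have k: "(\<Sum>i\<in>UNIV. L$i$i * (x s $ i - xs $ i) * p s $ i) \<le> - (c/2) * (norm (x s - xs))^2"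
        unfolding p_def by (rule key_ineq[OF D L c(2) xs xsX])
      have "(\<Sum>i\<in>UNIV. L$i$i * (2 * (x s $ i - xs $ i) * p s $ i)) = 2 * (\<Sum>i\<in>UNIV. L$i$i * (x s $ i - xs $ i) * p s $ i)"
        unfolding sum_distrib_left by (intro sum.cong refl) (simp add: algebra_simps)
      moreover have "V s \<le> Ls * (norm (x s - xs))^2" unfolding V_def Ls_def by (rule V_norm[OF L])
      then have "2 * \<mu> * V s \<le> 2 * \<mu> * (Ls * (norm (x s - xs))^2)" using \<mu> by (intro mult_left_mono) auto
      moreover have "2 * \<mu> * (Ls * (norm (x s - xs))^2) = c * (norm (x s - xs))^2" using Ls by (simp add: \<mu>_def)
      ultimately have "2 * \<mu> * V s + (\<Sum>i\<in>UNIV. L$i$i * (2 * (x s $ i - xs $ i) * p s $ i)) \<le> 0"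
        using k by linarith
      then have "exp (2 * \<mu> * s) * (2 * \<mu> * V s + (\<Sum>i\<in>UNIV. L$i$i * (2 * (x s $ i - xs $ i) * p s $ i))) \<le> 0"
        by (simp add: mult_nonneg_nonpos)
      then show ?thesis unfolding h'_def by (simp add: algebra_simps)
    qed
    define ET where "ET = exp (2 * \<mu> * t)"
    define VB where "VB = (\<Sum>i\<in>UNIV. L$i$i * (bx D $ i)^2)"
    define CV where "CV = (\<Sum>i\<in>UNIV. 2 * L$i$i * bx D $ i)"
    define K where "K = (2 * \<mu> * ET) * VB + ET * CV + 1"
    have CV0: "0 \<le> CV" unfolding CV_def using Lp bx_pos[OF D] by (intro sum_nonneg) (simp add: less_imp_le)
    have VB0: "0 \<le> VB" unfolding VB_def using Lp by (intro sum_nonneg) (simp add: less_imp_le)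
    have ET0: "0 \<le> ET" by (simp add: ET_def)
    have K0: "K > 0" unfolding K_def using \<mu> CV0 VB0 ET0 by (simp add: add_nonneg_pos)
    have acx': "abs_continuous_on 0 t h"
    proof (rule ac_comp[OF acx K0])
      fix s r assume s: "s \<in> {0..t}" and r: "r \<in> {0..t}"
      have xsr: "x s \<in> box_set D" "x r \<in> box_set D" using s r inX by auto
      have e1: "\<bar>exp (2 * \<mu> * s) - exp (2 * \<mu> * r)\<bar> \<le> (2 * \<mu> * ET) * \<bar>s - r\<bar>"
        using exp_lip[of "2 * \<mu>" s t r] s r \<mu> by (simp add: ET_def)
      have "\<bar>h s - h r\<bar> \<le> ((2 * \<mu> * ET) * VB) * \<bar>s - r\<bar> + (ET * CV) * norm (x s - x r)"
        unfolding h_def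
      proof (rule prod_lip[OF e1])
        show "0 \<le> V s" unfolding V_def by (rule V_nonneg[OF L])
        show "V s \<le> VB" unfolding V_def VB_def by (rule V_box[OF L D xsr(1) xs(1)])
        show "0 \<le> exp (2 * \<mu> * r)" by simp
        show "exp (2 * \<mu> * r) \<le> ET" unfolding ET_def using r \<mu> by simp
        show "\<bar>V s - V r\<bar> \<le> CV * norm (x s - x r)" unfolding V_def CV_def by (rule V_lip[OF L D xsr xs(1)])
      qed (use \<mu> ET0 CV0 in auto)
      also have "\<dots> \<le> K * \<bar>s - r\<bar> + K * norm (x s - x r)"
        unfolding K_def using \<mu> ET0 CV0 VB0
        by (intro add_mono mult_right_mono) (auto simp: add_nonneg_nonneg)
      finally show "\<bar>h s - h r\<bar> \<le> K * norm (x s - x r) + K * \<bar>s - r\<bar>" by linarith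
    qed
    have "h t \<le> h 0" by (rule ac_mono[OF t acx' Nn der negd])
    then have hV: "exp (2 * \<mu> * t) * V t \<le> V 0" by (simp add: h_def)
    have "V t \<le> exp (- (2 * \<mu> * t)) * V 0"
    proof -
      have "V t = exp (- (2 * \<mu> * t)) * (exp (2 * \<mu> * t) * V t)" by (simp add: exp_minus field_simps)
      also have "\<dots> \<le> exp (- (2 * \<mu> * t)) * V 0" using hV by (intro mult_left_mono) auto
      finally show ?thesis .
    qed
    then have "sqrt (V t) \<le> sqrt (exp (- (2 * \<mu> * t)) * V 0)" by simp
    also have "\<dots> = exp (- \<mu> * t) * sqrt (V 0)"
    proof -
      have "exp (- (2 * \<mu> * t)) = (exp (- \<mu> * t))^2"
        by (simp add: power2_eq_square exp_add[symmetric])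
      then show ?thesis by (simp add: real_sqrt_mult)
    qed
    finally show ?thesis unfolding wnorm_V[OF L] V_def .
  qed
  show ?thesis
  proof (intro exI[of _ xs] conjI)
    show "xs \<in> box_set D" by (rule xs(1))
    show "proj_tc (box_set D) xs ((W - D) *v xs + u) = 0"
      using proj_eq[OF D xs(1)] xs(2) by (simp add: A_def)
    show "\<forall>y\<in>box_set D. proj_tc (box_set D) y ((W - D) *v y + u) = 0 \<longrightarrow> y = xs"
    proof (intro ballI impI)
      fix y assume y: "y \<in> box_set D" "proj_tc (box_set D) y ((W - D) *v y + u) = 0"
      then have "pp D y (A *v y + u) = 0" using proj_eq[OF D y(1)] by (simp add: A_def)
      then show "y = xs" using eq_unique[OF D L N y(1) _ xs] by blast
    qed
    show "\<exists>\<mu>>0. \<forall>x. pds_solution (box_set D) (W - D) u x \<longrightarrow>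
                 (\<forall>t\<ge>0. wnorm L (x t - xs) \<le> exp (- \<mu> * t) * wnorm L (x 0 - xs))"
      using \<mu> main unfolding A_def by blast
  qed
qed

end
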